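(* Let $x,y\in PSBT_n$ be distinct. If the vertices $x^v$ and $y^v$ of $\mathrm{PSB}(n)$ are not adjacent, then there exist at least two tours in $PSBT_n$, different from $x$ and $y$, all of whose arcs are arcs of the multigraph $x\cup y$.
   Context: Let $n\ge 3$ and let $D_n$ be the complete directed graph on the vertex set (cities) $\{1,\dots,n\}$ with arc set $E=\{(u,v):u\neq v\}$. A Hamiltonian tour is a directed Hamiltonian cycle in $D_n$; for a tour $\tau$, $\tau(i)$ denotes the successor of city $i$, and $\tau^k(i)$, $\tau^{-k}(i)$ denote the $k$-th successor and $k$-th predecessor of $i$. A city $i$ is a peak of $\tau$ if $\tau^{-1}(i)<i$ and $\tau(i)<i$. A city $i$ is a step-back peak of $\tau$ if either ($\tau^{-1}(i)<i$, $\tau(i)=i-1$ and $\tau^2(i)>i$) or ($\tau^{-2}(i)>i$, $\tau^{-1}(i)=i-1$ and $\tau(i)<i$). A proper peak is a peak that is not a step-back peak. A pyramidal tour with step-backs is a Hamiltonian tour whose only proper peak is $n$; $PSBT_n$ denotes the set of all such tours. For a tour $x$, $x^v\in\mathbb{R}^E$ is its characteristic vector ($x^v_e=1$ if arc $e$ belongs to $x$, and $0$ otherwise), and $\mathrm{PSB}(n)=\mathrm{conv}\{x^v: x\in PSBT_n\}$; its vertices are the vectors $x^v$, $x\in PSBT_n$. Two vertices are adjacent if the segment joining them is an edge (one-dimensional face) of $\mathrm{PSB}(n)$. For tours $x,y$, $x\cup y$ denotes the multigraph on $\{1,\dots,n\}$ containing all arcs of $x$ and all arcs of $y$ (arcs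 common to both counted twice). *)

theory Defs
  imports "HOL-Analysis.Analysis" "HOL-Library.Function_Algebras"
begin

text \<open>Real vector space structure on functions (pointwise), so that
  characteristic vectors in R^E can be represented as functions
  nat \<times> nat \<Rightarrow> real (supported on the arc set E).\<close>

instantiation "fun" :: (type, real_vector) real_vector
begin
definition scaleR_fun :: "real \<Rightarrow> ('a \<Rightarrow> 'b) \<Rightarrow> 'a \<Rightarrow> 'b"
  where "scaleR_fun r f = (\<lambda>x. r *\<^sub>R f x)"
instance
  by standard (auto simp: scaleR_fun_def fun_eq_iff scaleR_add_right scaleR_add_left)
end

text \<open>A Hamiltonian tour on cities {1..n}, given by its successor function;
  normalised to be the identity outside {1..n}.\<close>
definition tour :: "nat \<Rightarrow> (nat \<Rightarrow> nat) \<Rightarrow> bool" where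
  "tour n \<tau> \<longleftrightarrow> bij_betw \<tau> {1..n} {1..n}
     \<and> (\<forall>i. i \<notin> {1..n} \<longrightarrow> \<tau> i = i)
     \<and> (\<forall>i\<in>{1..n}. \<tau> i \<noteq> i)
     \<and> (\<forall>i\<in>{1..n}. \<forall>j\<in>{1..n}. \<exists>k. (\<tau> ^^ k) i = j)"

definition pred_city :: "nat \<Rightarrow> (nat \<Rightarrow> nat) \<Rightarrow> nat \<Rightarrow> nat" where
  "pred_city n \<tau> i = inv_into {1..n} \<tau> i"

definition peak :: "nat \<Rightarrow> (nat \<Rightarrow> nat) \<Rightarrow> nat \<Rightarrow> bool" where
  "peak n \<tau> i \<longleftrightarrow> pred_city n \<tau> i < i \<and> \<tau> i < i"

definition step_back_peak :: "nat \<Rightarrow> (nat \<Rightarrow> nat) \<Rightarrow> nat \<Rightarrow> bool" where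
  "step_back_peak n \<tau> i \<longleftrightarrow>
     (pred_city n \<tau> i < i \<and> \<tau> i = i - 1 \<and> (\<tau> ^^ 2) i > i)
   \<or> (pred_city n \<tau> (pred_city n \<tau> i) > i \<and> pred_city n \<tau> i = i - 1 \<and> \<tau> i < i)"

definition proper_peak :: "nat \<Rightarrow> (nat \<Rightarrow> nat) \<Rightarrow> nat \<Rightarrow> bool" where
  "proper_peak n \<tau> i \<longleftrightarrow> peak n \<tau> i \<and> \<not> step_back_peak n \<tau> i"

definition PSBT :: "nat \<Rightarrow> (nat \<Rightarrow> nat) set" where
  "PSBT n = {\<tau>. tour n \<tau> \<and> (\<forall>i\<in>{1..n}. proper_peak n \<tau> i \<longleftrightarrow> i = n)}"

definition arcs :: "nat \<Rightarrow> (nat \<Rightarrow> nat) \<Rightarrow> (nat \<times> nat) set" where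
  "arcs n \<tau> = {(i, \<tau> i) | i. i \<in> {1..n}}"

definition charvec :: "nat \<Rightarrow> (nat \<Rightarrow> nat) \<Rightarrow> (nat \<times> nat \<Rightarrow> real)" where
  "charvec n \<tau> = (\<lambda>e. if e \<in> arcs n \<tau> then 1 else 0)"

definition PSB :: "nat \<Rightarrow> (nat \<times> nat \<Rightarrow> real) set" where
  "PSB n = convex hull (charvec n ` PSBT n)"

definition adjacent :: "nat \<Rightarrow> (nat \<Rightarrow> nat) \<Rightarrow> (nat \<Rightarrow> nat) \<Rightarrow> bool" where
  "adjacent n x y \<longleftrightarrow> closed_segment (charvec n x) (charvec n y) face_of PSB n"

end

theory Submission
  imports Defs
begin

lemma sum_fun_app: "(\<Sum>v\<in>S. (f v :: 'a \<Rightarrow> real)) e = (\<Sum>v\<in>S. f v e)"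
  by (induction S rule: infinite_finite_induct) (auto simp: plus_fun_def zero_fun_def)

lemma scaleR_app: "(r *\<^sub>R (f :: 'a \<Rightarrow> real)) e = r * f e"
  by (simp add: scaleR_fun_def)

definition aff :: "real \<Rightarrow> ('a \<Rightarrow> real) \<Rightarrow> 'a set \<Rightarrow> ('a \<Rightarrow> real) \<Rightarrow> real" where
  "aff c d K z = c + (\<Sum>e\<in>K. d e * z e)"

lemma aff_comb:
  assumes "finite S" "sum u S = 1"
  shows "aff c d K (\<Sum>v\<in>S. u v *\<^sub>R v) = (\<Sum>v\<in>S. u v * aff c d K v)"
proof -
  have "aff c d K (\<Sum>v\<in>S. u v *\<^sub>R v) = c + (\<Sum>e\<in>K. \<Sum>v\<in>S. d e * (u v * v e))"
    by (simp add: aff_def sum_fun_app scaleR_app sum_distrib_left)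
  also have "\<dots> = c * sum u S + (\<Sum>v\<in>S. \<Sum>e\<in>K. u v * (d e * v e))"
    using assms(2) by (simp add: sum.swap[of _ K] algebra_simps)
  also have "\<dots> = (\<Sum>v\<in>S. u v * aff c d K v)"
    by (simp add: aff_def sum_distrib_left sum_distrib_right distrib_left sum.distrib mult.commute)
  finally show ?thesis .
qed

lemma aff_seg: "aff c d K ((1 - t) *\<^sub>R a + t *\<^sub>R b) = (1-t) * aff c d K a + t * aff c d K b"
  proof -
  have "(\<Sum>e\<in>K. d e * ((1 - t) * a e + t * b e)) = (1-t) * (\<Sum>e\<in>K. d e * a e) + t * (\<Sum>e\<in>K. d e * b e)"
    by (simp add: sum_distrib_left sum.distrib[symmetric] algebra_simps)
  then show ?thesis by (simp add: aff_def scaleR_app plus_fun_def algebra_simps)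
qed

lemma G1:
  assumes nn: "\<And>v. v \<in> V \<Longrightarrow> aff c d K v \<ge> 0"
  shows "convex hull {v\<in>V. aff c d K v = 0} face_of convex hull V"
proof -
  let ?Q = "{v\<in>V. aff c d K v = 0}"
  have key: "aff c d K a \<ge> 0 \<and> (aff c d K a = 0 \<longrightarrow> a \<in> convex hull ?Q)" if a: "a \<in> convex hull V" for a
  proof -
    from a obtain S u where S: "finite S" "S \<subseteq> V" "\<forall>x\<in>S. 0 \<le> u x" "sum u S = 1"
      "(\<Sum>v\<in>S. u v *\<^sub>R v) = a" unfolding convex_hull_explicit by blast
    have ea: "aff c d K a = (\<Sum>v\<in>S. u v * aff c d K v)"
      using aff_comb[OF S(1) S(4)] S(5) by simp
    have tn: "\<forall>v\<in>S. 0 \<le> u v * aff c d K v" using S nn by auto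
    show ?thesis
    proof
      show "aff c d K a \<ge> 0" using ea tn by (simp add: sum_nonneg)
      show "aff c d K a = 0 \<longrightarrow> a \<in> convex hull ?Q"
      proof
        assume "aff c d K a = 0"
        then have s0: "(\<Sum>v\<in>S. u v * aff c d K v) = 0" using ea by simp
        have eqv: "(\<Sum>v\<in>S. u v * aff c d K v) = 0 \<longleftrightarrow> (\<forall>v\<in>S. u v * aff c d K v = 0)"
          by (rule sum_nonneg_eq_0_iff[OF S(1)]) (use tn in blast)
        have z: "\<forall>v\<in>S. u v * aff c d K v = 0" using eqv s0 by (rule iffD1)
        define S' where "S' = {v\<in>S. aff c d K v = 0}"
        have fS': "finite S'" "S' \<subseteq> S" using S(1) unfolding S'_def by auto
        have z0: "\<forall>v\<in>S - S'. u v = 0" using z unfolding S'_def by auto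
        have e1: "sum u S = sum u S'"
          by (rule sum.mono_neutral_right[OF S(1) fS'(2)]) (use z0 in blast)
        have e2: "(\<Sum>v\<in>S. u v *\<^sub>R v) = (\<Sum>v\<in>S'. u v *\<^sub>R v)"
          by (rule sum.mono_neutral_right[OF S(1) fS'(2)]) (use z0 in simp)
        have q1: "S' \<subseteq> ?Q" using S(2) unfolding S'_def by blast
        have q2: "\<forall>x\<in>S'. 0 \<le> u x" using S(3) fS'(2) by blast
        show "a \<in> convex hull ?Q" unfolding convex_hull_explicit mem_Collect_eq
          apply (intro exI[of _ S'] exI[of _ u] conjI)
          using q1 q2 fS'(1) e1 e2 S(4) S(5) by simp_all
      qed
    qed
  qed
  have zq: "aff c d K x = 0" if "x \<in> convex hull ?Q" for x
  proof -
    have "x \<in> convex hull V" using that hull_mono[of ?Q V] by auto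
    from that obtain S u where S: "finite S" "S \<subseteq> ?Q" "\<forall>x\<in>S. 0 \<le> u x" "sum u S = 1"
      "(\<Sum>v\<in>S. u v *\<^sub>R v) = x" unfolding convex_hull_explicit by blast
    have "aff c d K x = (\<Sum>v\<in>S. u v * aff c d K v)"
      using aff_comb[OF S(1) S(4)] S(5) by simp
    also have "\<dots> = 0" using S(2) by (intro sum.neutral) auto
    finally show ?thesis .
  qed
  show ?thesis unfolding face_of_def
  proof (intro conjI ballI impI)
    show "convex hull ?Q \<subseteq> convex hull V" by (rule hull_mono) auto
    show "convex (convex hull ?Q)" by simp
    fix a b x assume ab: "a \<in> convex hull V" "b \<in> convex hull V" and x: "x \<in> convex hull ?Q"
      and xs: "x \<in> open_segment a b"
    from xs obtain t where t: "0 < t" "t < 1" "x = (1 - t) *\<^sub>R a + t *\<^sub>R b"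
      unfolding in_segment by blast
    have "aff c d K x = 0" using zq[OF x] .
    then have "(1-t) * aff c d K a + t * aff c d K b = 0" unfolding t(3) aff_seg .
    moreover have "aff c d K a \<ge> 0" "aff c d K b \<ge> 0" using key ab by auto
    moreover have "(1-t) * aff c d K a \<ge> 0" "t * aff c d K b \<ge> 0"
      using calculation t by (simp_all add: mult_nonneg_nonneg)
    ultimately have "(1-t) * aff c d K a = 0" "t * aff c d K b = 0" by linarith+
    then have "aff c d K a = 0" "aff c d K b = 0" using t by auto
    then show "a \<in> convex hull ?Q" "b \<in> convex hull ?Q" using key ab by auto
  qed
qed


lemma aff_scale: "aff (s*c) (\<lambda>e. s * d e) K z = s * aff c d K z"
  by (simp add: aff_def sum_distrib_left algebra_simps)

definition ind :: "'a set \<Rightarrow> 'a \<Rightarrow> real" where "ind S = (\<lambda>e. if e \<in> S then 1 else 0)"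

lemma comb:
  fixes U V W :: "'a set"
  assumes f: "finite U" "finite V" and c: "card U = card V" and uv: "U \<noteq> V"
    and w: "W \<subseteq> U \<union> V" "W \<noteq> U" "W \<noteq> V"
  shows "(\<exists>e\<in>U\<inter>V. e \<notin> W) \<or> (\<exists>a\<in>U-V. \<exists>b\<in>V-U. (a\<in>W \<longleftrightarrow> b\<in>W))"
proof -
  have "\<not> U \<subseteq> V" using card_subset_eq[OF f(2)] c uv by metis
  then obtain a0 where a0: "a0 \<in> U - V" by blast
  have "\<not> V \<subseteq> U" using card_subset_eq[OF f(1)] c uv by metis
  then obtain b0 where b0: "b0 \<in> V - U" by blast
  show ?thesis
  proof (rule ccontr)
    assume H: "\<not> ?thesis"
    then have C: "U \<inter> V \<subseteq> W" by blast
    have H2: "\<And>a b. a\<in>U-V \<Longrightarrow> b\<in>V-U \<Longrightarrow> a\<in>W \<longleftrightarrow> b\<notin>W" using H by blast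
    show False
    proof (cases "a0 \<in> W")
      case True
      then have "\<forall>b\<in>V-U. b\<notin>W" using H2 a0 by blast
      moreover have "\<forall>a\<in>U-V. a \<in> W" using H2 b0 calculation by blast
      ultimately have "W = U" using C w(1) by blast
      then show False using w(2) by blast
    next
      case False
      then have "\<forall>b\<in>V-U. b\<in>W" using H2 a0 by blast
      moreover have "\<forall>a\<in>U-V. a \<notin> W" using H2 b0 calculation by blast
      ultimately have "W = V" using C w(1) by blast
      then show False using w(3) by blast
    qed
  qed
qed

lemma exists_phi:
  fixes U V W :: "'a set"
  assumes f: "finite U" "finite V" and c: "card U = card V" and uv: "U \<noteq> V"
    and w: "W \<subseteq> U \<union> V" "W \<noteq> U" "W \<noteq> V"
  shows "\<exists>c d K. finite K \<and> aff c d K (ind U) = 0 \<and> aff c d K (ind V) = 0 \<and> aff c d K (ind W) > 0"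
proof -
  have "\<exists>c d K. finite K \<and> aff c d K (ind U) = 0 \<and> aff c d K (ind V) = 0 \<and> aff c d K (ind W) \<noteq> 0"
    using comb[OF assms]
  proof
    assume "\<exists>e\<in>U\<inter>V. e \<notin> W"
    then obtain e where "e \<in> U\<inter>V" "e \<notin> W" by blast
    then show ?thesis
      by (intro exI[of _ 1] exI[of _ "\<lambda>_. -1"] exI[of _ "{e}"]) (simp add: aff_def ind_def)
  next
    assume "\<exists>a\<in>U-V. \<exists>b\<in>V-U. (a\<in>W \<longleftrightarrow> b\<in>W)"
    then obtain a b where ab: "a\<in>U-V" "b\<in>V-U" "a\<in>W \<longleftrightarrow> b\<in>W" by blast
    then have "a \<noteq> b" by blast
    with ab show ?thesis
      by (intro exI[of _ "-1"] exI[of _ "\<lambda>_. 1"] exI[of _ "{a,b}"]) (auto simp add: aff_def ind_def)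
  qed
  then obtain c d K where K: "finite K" "aff c d K (ind U) = 0" "aff c d K (ind V) = 0" "aff c d K (ind W) \<noteq> 0"
    by blast
  define s :: real where "s = (if aff c d K (ind W) > 0 then 1 else -1)"
  have "s * aff c d K (ind W) > 0" using K(4) unfolding s_def by auto
  then show ?thesis using K
    by (intro exI[of _ "s*c"] exI[of _ "\<lambda>e. s * d e"] exI[of _ K]) (simp add: aff_scale)
qed

lemma tour_arcs:
  assumes "tour n z"
  shows "arcs n z = (\<lambda>i. (i, z i)) ` {1..n}" "arcs n z \<subseteq> {1..n} \<times> {1..n}" "card (arcs n z) = n"
    "finite (arcs n z)"
proof -
  show a: "arcs n z = (\<lambda>i. (i, z i)) ` {1..n}" unfolding arcs_def by auto
  have "z ` {1..n} = {1..n}" using assms unfolding tour_def bij_betw_def by blast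
  then show "arcs n z \<subseteq> {1..n} \<times> {1..n}" unfolding a by auto
  have "inj_on (\<lambda>i. (i, z i)) {1..n}" by (auto simp: inj_on_def)
  then show "card (arcs n z) = n" unfolding a by (simp add: card_image)
  show "finite (arcs n z)" unfolding a by simp
qed

lemma tour_eq:
  assumes "tour n z" "tour n x" "arcs n z = arcs n x"
  shows "z = x"
proof
  fix i
  show "z i = x i"
  proof (cases "i \<in> {1..n}")
    case True
    then have "(i, z i) \<in> arcs n x" using assms(3) unfolding arcs_def by blast
    then show ?thesis unfolding arcs_def by auto
  next
    case False
    have "\<forall>i. i \<notin> {1..n} \<longrightarrow> z i = i" "\<forall>i. i \<notin> {1..n} \<longrightarrow> x i = i"
      using assms(1,2) unfolding tour_def by blast+
    then show ?thesis using False by simp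
  qed
qed

lemma charvec_ind: "charvec n z = ind (arcs n z)"
  by (simp add: charvec_def ind_def)

lemma ind_inj:
  assumes "ind A = ind B" shows "A = B"
proof (rule set_eqI)
  fix e
  have "ind A e = ind B e" using assms by simp
  then show "e \<in> A \<longleftrightarrow> e \<in> B" by (simp add: ind_def split: if_splits)
qed


lemma phi1:
  assumes "finite K1" "A \<subseteq> K" "K1 = K - B"
  shows "aff 0 (\<lambda>_. 1) K1 (ind A) \<ge> 0" "aff 0 (\<lambda>_. 1) K1 (ind A) = 0 \<longleftrightarrow> A \<subseteq> B"
proof -
  have nn: "\<And>e. e \<in> K1 \<Longrightarrow> 0 \<le> ind A e" by (simp add: ind_def)
  show "aff 0 (\<lambda>_. 1) K1 (ind A) \<ge> 0" unfolding aff_def using nn by (simp add: sum_nonneg)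
  have "aff 0 (\<lambda>_. 1) K1 (ind A) = 0 \<longleftrightarrow> (\<forall>e\<in>K1. ind A e = 0)"
    unfolding aff_def using sum_nonneg_eq_0_iff[OF assms(1) nn] by simp
  also have "\<dots> \<longleftrightarrow> A \<subseteq> B" using assms(2,3) by (auto simp: ind_def)
  finally show "aff 0 (\<lambda>_. 1) K1 (ind A) = 0 \<longleftrightarrow> A \<subseteq> B" .
qed

theorem lemma2:
  fixes n :: nat and x y :: "nat \<Rightarrow> nat"
  assumes "n \<ge> 3" and "x \<in> PSBT n" and "y \<in> PSBT n" and "x \<noteq> y"
    and "\<not> adjacent n x y"
  shows "\<exists>z1 z2. z1 \<in> PSBT n \<and> z2 \<in> PSBT n \<and> z1 \<noteq> z2
           \<and> z1 \<notin> {x, y} \<and> z2 \<notin> {x, y}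
           \<and> arcs n z1 \<subseteq> arcs n x \<union> arcs n y
           \<and> arcs n z2 \<subseteq> arcs n x \<union> arcs n y"
proof (rule ccontr)
  assume neg: "\<not> ?thesis"
  have tx: "tour n x" and ty: "tour n y" using assms(2,3) unfolding PSBT_def by auto
  have tP: "\<And>z. z \<in> PSBT n \<Longrightarrow> tour n z" unfolding PSBT_def by auto
  define U where "U = arcs n x"
  define Vy where "Vy = arcs n y"
  define R where "R = {z\<in>PSBT n. z \<notin> {x,y} \<and> arcs n z \<subseteq> U \<union> Vy}"
  have Rsub: "\<forall>z1\<in>R. \<forall>z2\<in>R. z1 = z2" using neg unfolding R_def U_def Vy_def by blast
  define K where "K = {1..n} \<times> {1..n}"
  define K1 where "K1 = K - (U \<union> Vy)"
  have fK1: "finite K1" unfolding K1_def K_def by simp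
  let ?f = "aff 0 (\<lambda>_. 1) K1"
  have ph: "?f (charvec n z) \<ge> 0" "?f (charvec n z) = 0 \<longleftrightarrow> arcs n z \<subseteq> U \<union> Vy"
    if "z \<in> PSBT n" for z
    using phi1[OF fK1 _ K1_def, of "arcs n z"] tour_arcs(2)[OF tP[OF that]]
    unfolding charvec_ind K_def by auto
  define Q1 where "Q1 = {w \<in> charvec n ` PSBT n. ?f w = 0}"
  have face1: "convex hull Q1 face_of PSB n"
    unfolding Q1_def PSB_def by (rule G1) (use ph in auto)
  have Q1eq: "Q1 = charvec n ` ({x,y} \<union> R)"
  proof -
    have "Q1 = charvec n ` {z\<in>PSBT n. arcs n z \<subseteq> U \<union> Vy}"
      unfolding Q1_def using ph by auto
    also have "{z\<in>PSBT n. arcs n z \<subseteq> U \<union> Vy} = {x,y} \<union> R"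
      unfolding R_def U_def Vy_def using assms(2,3) by auto
    finally show ?thesis .
  qed
  have uv: "U \<noteq> Vy" using tour_eq[OF tx ty] assms(4) unfolding U_def Vy_def by metis
  show False
  proof (cases "R = {}")
    case True
    then have "Q1 = {charvec n x, charvec n y}" using Q1eq by simp
    then have "adjacent n x y" using face1 unfolding adjacent_def segment_convex_hull by simp
    then show False using assms(5) by simp
  next
    case False
    then obtain z0 where z0: "z0 \<in> R" by blast
    then have Req: "R = {z0}" using Rsub by blast
    have tz: "tour n z0" using z0 tP unfolding R_def by blast
    define W where "W = arcs n z0"
    have W1: "W \<subseteq> U \<union> Vy" using z0 unfolding R_def W_def by blast
    have W2: "W \<noteq> U" "W \<noteq> Vy" using tour_eq[OF tz tx] tour_eq[OF tz ty] z0
      unfolding R_def W_def U_def Vy_def by auto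
    obtain c d K2 where K2: "finite K2" "aff c d K2 (ind U) = 0" "aff c d K2 (ind Vy) = 0"
      "aff c d K2 (ind W) > 0"
    proof -
      have fU: "finite U" "finite Vy" "card U = card Vy"
        using tour_arcs(3,4)[OF tx] tour_arcs(3,4)[OF ty] unfolding U_def Vy_def by auto
      show ?thesis using exists_phi[OF fU uv W1 W2] that by blast
    qed
    have Q1': "Q1 = {ind U, ind Vy, ind W}" using Q1eq Req
      unfolding U_def Vy_def W_def charvec_ind by auto
    have "{t \<in> {ind U, ind Vy, ind W}. aff c d K2 t = 0} = {ind U, ind Vy}"
      using K2 by auto
    moreover have "convex hull {t \<in> {ind U, ind Vy, ind W}. aff c d K2 t = 0} face_of convex hull {ind U, ind Vy, ind W}"
      by (rule G1) (use K2 in auto)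
    ultimately have "convex hull {ind U, ind Vy} face_of convex hull Q1" using Q1' by simp
    then have "closed_segment (charvec n x) (charvec n y) face_of PSB n"
      using face_of_trans[OF _ face1] unfolding segment_convex_hull charvec_ind U_def Vy_def by blast
    then show False using assms(5) unfolding adjacent_def by simp
  qed
qed

end
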